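(* Let $\rho>0$, $y\in\mathbb{R}^n$, and let $P_y\in\mathbb{R}^{n\times n}$ be any permutation matrix such that $\tilde y=P_y y$ satisfies $\tilde y_1\ge\tilde y_2\ge\cdots\ge\tilde y_n$. Then \[ S_\rho(y)=P_y^T\,\Pi_{\mathcal D}(P_y y-\rho w), \] where $w_k=n-2k+1$, $k=1,\dots,n$.
   Context: For $\rho>0$ and $y\in\mathbb{R}^n$, $S_\rho(y):=\operatorname{argmin}_{x\in\mathbb{R}^n}\big\{\tfrac12\|x-y\|^2+\rho\sum_{1\le i<j\le n}|x_i-x_j|\big\}$. $\mathcal D:=\{x\in\mathbb{R}^n : x_1\ge x_2\ge\cdots\ge x_n\}$ and $\Pi_{\mathcal D}$ is the Euclidean projection onto $\mathcal D$. *)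

theory Defs
  imports Complex_Main
begin

text \<open>Vectors in R^n are represented as functions nat => real that vanish at indices >= n;
  index k (0-based) corresponds to coordinate k+1 of the paper.\<close>

definition vecs :: "nat \<Rightarrow> (nat \<Rightarrow> real) set" where
  "vecs n = {x. \<forall>i\<ge>n. x i = 0}"

definition mv :: "nat \<Rightarrow> (nat \<Rightarrow> nat \<Rightarrow> real) \<Rightarrow> (nat \<Rightarrow> real) \<Rightarrow> nat \<Rightarrow> real" where
  "mv n P y = (\<lambda>i. if i < n then (\<Sum>j<n. P i j * y j) else 0)"

definition transp_mat :: "(nat \<Rightarrow> nat \<Rightarrow> real) \<Rightarrow> nat \<Rightarrow> nat \<Rightarrow> real" where
  "transp_mat P = (\<lambda>i j. P j i)"

definition is_perm_matrix :: "nat \<Rightarrow> (nat \<Rightarrow> nat \<Rightarrow> real) \<Rightarrow> bool" where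
  "is_perm_matrix n P \<longleftrightarrow>
     (\<forall>i<n. \<forall>j<n. P i j = 0 \<or> P i j = 1) \<and>
     (\<forall>i<n. \<exists>!j. j < n \<and> P i j = 1) \<and>
     (\<forall>j<n. \<exists>!i. i < n \<and> P i j = 1)"

definition Dcone :: "nat \<Rightarrow> (nat \<Rightarrow> real) set" where
  "Dcone n = {x \<in> vecs n. \<forall>i j. i \<le> j \<longrightarrow> j < n \<longrightarrow> x j \<le> x i}"

definition sqdist :: "nat \<Rightarrow> (nat \<Rightarrow> real) \<Rightarrow> (nat \<Rightarrow> real) \<Rightarrow> real" where
  "sqdist n x y = (\<Sum>i<n. (x i - y i)^2)"

definition projD :: "nat \<Rightarrow> (nat \<Rightarrow> real) \<Rightarrow> nat \<Rightarrow> real" where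
  "projD n z = (THE p. p \<in> Dcone n \<and> (\<forall>u\<in>Dcone n. sqdist n p z \<le> sqdist n u z))"

definition flobj :: "nat \<Rightarrow> real \<Rightarrow> (nat \<Rightarrow> real) \<Rightarrow> (nat \<Rightarrow> real) \<Rightarrow> real" where
  "flobj n \<rho> y x = 1/2 * sqdist n x y + \<rho> * (\<Sum>i<n. \<Sum>j\<in>{i<..<n}. \<bar>x i - x j\<bar>)"

definition S_set :: "nat \<Rightarrow> real \<Rightarrow> (nat \<Rightarrow> real) \<Rightarrow> (nat \<Rightarrow> real) set" where
  "S_set n \<rho> y = {x \<in> vecs n. \<forall>u\<in>vecs n. flobj n \<rho> y x \<le> flobj n \<rho> y u}"

text \<open>w_k = n - 2k + 1 for k = 1..n; here with 0-based index k, i.e. w k = n - 2(k+1) + 1.\<close>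
definition wvec :: "nat \<Rightarrow> nat \<Rightarrow> real" where
  "wvec n = (\<lambda>k. if k < n then real n - 2 * real (k + 1) + 1 else 0)"

end

theory Submission
  imports Defs "HOL-Analysis.Analysis"
begin

definition Jf :: "nat \<Rightarrow> (nat \<Rightarrow> real) \<Rightarrow> real" where
  "Jf n x = (\<Sum>i<n. \<Sum>j\<in>{i<..<n}. \<bar>x i - x j\<bar>)"

lemma flobj_alt: "flobj n \<rho> y x = 1/2 * sqdist n x y + \<rho> * Jf n x"
  by (simp add: flobj_def Jf_def)

lemma swap_sum: "(\<Sum>i<(n::nat). \<Sum>j\<in>{i<..<n}. g i j) = (\<Sum>j<n. \<Sum>i<j. g i j :: real)"
proof (induction n)
  case 0 then show ?case by simp
next
  case (Suc n)
  have e: "{i<..<Suc n} = insert n {i<..<n}" if "i < n" for i using that by auto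
  have em: "{n<..<Suc n} = {}" by auto
  have "(\<Sum>i<Suc n. \<Sum>j\<in>{i<..<Suc n}. g i j) = (\<Sum>i<n. \<Sum>j\<in>{i<..<Suc n}. g i j)"
    by (simp add: em)
  also have "\<dots> = (\<Sum>i<n. g i n + (\<Sum>j\<in>{i<..<n}. g i j))"
    by (rule sum.cong) (auto simp: e)
  also have "\<dots> = (\<Sum>j<Suc n. \<Sum>i<j. g i j)"
    using Suc by (simp add: sum.distrib)
  finally show ?case .
qed

lemma split_at: "(i::nat) < n \<Longrightarrow> sum (f::nat\<Rightarrow>real) {..<n} = sum f {..<i} + f i + sum f {i<..<n}"
proof -
  assume "i < n"
  then have "{..<n} = {..<i} \<union> insert i {i<..<n}" by (simp add: set_eq_iff) presburger
  moreover have "sum f ({..<i} \<union> {i<..<n}) = sum f {..<i} + sum f {i<..<n}"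
    by (rule sum.union_disjoint) auto
  ultimately show ?thesis by simp
qed

lemma Jf_double: "2 * Jf n x = (\<Sum>i<n. \<Sum>j<n. \<bar>x i - x j\<bar>)"
proof -
  have "(\<Sum>i<n. \<Sum>j<n. \<bar>x i - x j\<bar>) = (\<Sum>i<n. (\<Sum>j<i. \<bar>x i - x j\<bar>) + (\<Sum>j\<in>{i<..<n}. \<bar>x i - x j\<bar>))"
    by (rule sum.cong) (auto simp: split_at)
  also have "\<dots> = (\<Sum>i<n. \<Sum>j<i. \<bar>x i - x j\<bar>) + Jf n x"
    by (simp add: sum.distrib Jf_def)
  also have "(\<Sum>i<n. \<Sum>j<i. \<bar>x i - x j\<bar>) = Jf n x"
    unfolding Jf_def using swap_sum[where n=n and g="\<lambda>j i. \<bar>x i - x j\<bar>"] by (simp add: abs_minus_commute)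
  finally show ?thesis by simp
qed

lemma Jf_perm: "\<sigma> permutes {..<n} \<Longrightarrow> Jf n (x \<circ> \<sigma>) = Jf n x"
proof -
  assume p: "\<sigma> permutes {..<n}"
  have "2 * Jf n (x \<circ> \<sigma>) = (\<Sum>i<n. \<Sum>j<n. \<bar>x (\<sigma> i) - x (\<sigma> j)\<bar>)" by (simp add: Jf_double)
  also have "\<dots> = (\<Sum>i<n. \<Sum>j<n. \<bar>x (\<sigma> i) - x j\<bar>)"
    using sum.permute[OF p, of "\<lambda>j. \<bar>x _ - x j\<bar>"] by (simp add: comp_def)
  also have "\<dots> = (\<Sum>i<n. \<Sum>j<n. \<bar>x i - x j\<bar>)"
    using sum.permute[OF p, of "\<lambda>i. \<Sum>j<n. \<bar>x i - x j\<bar>"] by (simp add: comp_def)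
  finally show ?thesis by (simp add: Jf_double[symmetric])
qed

lemma sqdist_perm: "\<sigma> permutes {..<n} \<Longrightarrow> sqdist n (x \<circ> \<sigma>) (y \<circ> \<sigma>) = sqdist n x y"
  unfolding sqdist_def using sum.permute[of \<sigma> "{..<n}" "\<lambda>i. (x i - y i)^2"] by (simp add: comp_def)

lemma Jf_D: "x \<in> Dcone n \<Longrightarrow> Jf n x = (\<Sum>k<n. wvec n k * x k)"
proof -
  assume D: "x \<in> Dcone n"
  have "Jf n x = (\<Sum>i<n. \<Sum>j\<in>{i<..<n}. x i - x j)"
    unfolding Jf_def using D by (intro sum.cong refl) (auto simp: Dcone_def)
  also have "\<dots> = (\<Sum>i<n. \<Sum>j\<in>{i<..<n}. x i) - (\<Sum>i<n. \<Sum>j\<in>{i<..<n}. x j)"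
    by (simp add: sum_subtractf)
  also have "(\<Sum>i<n. \<Sum>j\<in>{i<..<n}. x j) = (\<Sum>j<n. \<Sum>i<j. x j)" by (rule swap_sum)
  also have "(\<Sum>i<n. \<Sum>j\<in>{i<..<n}. x i) - (\<Sum>j<n. \<Sum>i<j. x j) = (\<Sum>k<n. (real (n - 1 - k) - real k) * x k)"
    by (simp add: sum_subtractf[symmetric] algebra_simps)
  also have "\<dots> = (\<Sum>k<n. wvec n k * x k)"
    by (intro sum.cong refl) (auto simp: wvec_def of_nat_diff)
  finally show ?thesis .
qed


lemma fin_argmin:
  assumes "finite S" "S \<noteq> {}"
  shows "\<exists>m\<in>S. \<forall>x\<in>S. (f m::real) \<le> f x"
proof -
  have "Min (f ` S) \<in> f ` S" using assms by (intro Min_in) auto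
  then obtain m where m: "m \<in> S" "f m = Min (f ` S)" by auto
  have "\<forall>x\<in>S. f m \<le> f x" using assms m by auto
  with m show ?thesis by blast
qed

lemma sum_two:
  assumes "Suc i < n"
  shows "sum (f::nat\<Rightarrow>real) {..<n} = f i + f (Suc i) + sum f ({..<n} - {i, Suc i})"
proof -
  have "sum f {..<n} = f i + sum f ({..<n} - {i})"
    using assms by (intro sum.remove) auto
  also have "sum f ({..<n} - {i}) = f (Suc i) + sum f ({..<n} - {i} - {Suc i})"
    using assms by (intro sum.remove) auto
  also have "{..<n} - {i} - {Suc i} = {..<n} - {i, Suc i}" by auto
  finally show ?thesis by simp
qed

lemma sum_two_diff:
  assumes "Suc i < n" "\<And>k. k \<noteq> i \<Longrightarrow> k \<noteq> Suc i \<Longrightarrow> f k = g k"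
  shows "sum (f::nat\<Rightarrow>real) {..<n} = sum g {..<n} - g i - g (Suc i) + f i + f (Suc i)"
proof -
  have "sum f ({..<n} - {i, Suc i}) = sum g ({..<n} - {i, Suc i})"
    using assms(2) by (intro sum.cong) auto
  then show ?thesis using sum_two[OF assms(1), of f] sum_two[OF assms(1), of g] by simp
qed

lemma rearr:
  assumes u: "u \<in> vecs n" and z: "\<forall>i j. i \<le> j \<longrightarrow> j < n \<longrightarrow> z j \<le> z i"
  shows "\<exists>v. v \<in> Dcone n \<and> sqdist n v z \<le> sqdist n u z \<and> Jf n v = Jf n u"
proof -
  define R where "R = (\<lambda>\<pi>. u \<circ> \<pi>) ` {\<pi>. \<pi> permutes {..<n}}"
  have finR: "finite R" unfolding R_def by (intro finite_imageI finite_permutations) auto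
  have uR: "u \<in> R" unfolding R_def by (rule image_eqI[where x=id]) (auto simp: permutes_id)
  define M where "M = {v\<in>R. \<forall>x\<in>R. sqdist n v z \<le> sqdist n x z}"
  obtain m where m: "m \<in> R" "\<forall>x\<in>R. sqdist n m z \<le> sqdist n x z"
    using fin_argmin[OF finR, of "\<lambda>v. sqdist n v z"] uR by blast
  have finM: "finite M" using finR unfolding M_def by auto
  have "m \<in> M" using m unfolding M_def by auto
  then obtain v where vM: "v \<in> M" and vmin: "\<forall>x\<in>M. (\<Sum>k<n. real k * v k) \<le> (\<Sum>k<n. real k * x k)"
    using fin_argmin[OF finM, of "\<lambda>v. \<Sum>k<n. real k * v k"] by blast
  from vM have vR: "v \<in> R" and vle: "\<forall>x\<in>R. sqdist n v z \<le> sqdist n x z" unfolding M_def by auto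
  then obtain \<pi> where pi: "\<pi> permutes {..<n}" and v: "v = u \<circ> \<pi>" unfolding R_def by auto
  have adj: "v (Suc i) \<le> v i" if i: "Suc i < n" for i
  proof (rule ccontr)
    assume lt: "\<not> v (Suc i) \<le> v i"
    define t where "t = Transposition.transpose i (Suc i)"
    have tp: "t permutes {..<n}" unfolding t_def using i by (intro permutes_swap_id) auto
    define v' where "v' = v \<circ> t"
    have v'R: "v' \<in> R" unfolding R_def v'_def v
      using permutes_compose[OF tp pi] by (auto simp: comp_assoc)
    have ti: "t i = Suc i" "t (Suc i) = i" "\<And>k. k \<noteq> i \<Longrightarrow> k \<noteq> Suc i \<Longrightarrow> t k = k"
      unfolding t_def by auto
    have d1: "sqdist n v' z = sqdist n v z - (v i - z i)^2 - (v (Suc i) - z (Suc i))^2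
                + (v (Suc i) - z i)^2 + (v i - z (Suc i))^2"
      unfolding sqdist_def using sum_two_diff[OF i, of "\<lambda>k. (v' k - z k)^2" "\<lambda>k. (v k - z k)^2"]
      by (simp add: v'_def ti)
    have zz: "z (Suc i) \<le> z i" using z i by auto
    have "(v (Suc i) - z i)^2 + (v i - z (Suc i))^2 - (v i - z i)^2 - (v (Suc i) - z (Suc i))^2
          = - 2 * ((v (Suc i) - v i) * (z i - z (Suc i)))" by (simp add: power2_eq_square algebra_simps)
    moreover have "(v (Suc i) - v i) * (z i - z (Suc i)) \<ge> 0" using lt zz by simp
    ultimately have "sqdist n v' z \<le> sqdist n v z" using d1 by linarith
    then have "v' \<in> M" using v'R vle unfolding M_def by force
    moreover have "(\<Sum>k<n. real k * v' k) = (\<Sum>k<n. real k * v k) - real i * v i - real (Suc i) * v (Suc i)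
                + real i * v (Suc i) + real (Suc i) * v i"
      using sum_two_diff[OF i, of "\<lambda>k. real k * v' k" "\<lambda>k. real k * v k"]
      by (simp add: v'_def ti)
    ultimately show False using vmin lt by (force simp: algebra_simps)
  qed
  have sorted: "v (i + d) \<le> v i" if "i + d < n" for i d
    using that
  proof (induction d)
    case 0 then show ?case by simp
  next
    case (Suc d)
    then have "v (Suc (i + d)) \<le> v (i + d)" by (intro adj) simp
    with Suc show ?case by simp
  qed
  have "v \<in> Dcone n"
  proof -
    have "v \<in> vecs n" using u pi unfolding vecs_def v by (auto simp: permutes_not_in)
    moreover have "v j \<le> v i" if "i \<le> j" "j < n" for i j
      using sorted[of i "j - i"] that by simp
    ultimately show ?thesis unfolding Dcone_def by auto
  qed
  moreover have "sqdist n v z \<le> sqdist n u z" using vle uR by auto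
  moreover have "Jf n v = Jf n u" using Jf_perm[OF pi] v by simp
  ultimately show ?thesis by blast
qed


lemma sq_bound: "(a::real)^2 \<le> S \<Longrightarrow> \<bar>a\<bar> \<le> S + 1"
proof (cases "\<bar>a\<bar> \<le> 1")
  case True
  assume "a^2 \<le> S"
  moreover have "0 \<le> a^2" by simp
  ultimately show ?thesis using True by linarith
next
  case False
  assume h: "a^2 \<le> S"
  have "\<bar>a\<bar> * 1 \<le> \<bar>a\<bar> * \<bar>a\<bar>" using False by (intro mult_left_mono) auto
  then have "\<bar>a\<bar> \<le> a^2" by (simp add: power2_eq_square abs_mult_self_eq)
  with h show ?thesis by linarith
qed

lemma term_le_sqdist: "k < n \<Longrightarrow> (x k - y k)^2 \<le> sqdist n x y"
  unfolding sqdist_def by (rule member_le_sum) auto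

lemma coord_cont: "continuous_on S (\<lambda>x::nat\<Rightarrow>real. x i)"
  by (rule continuous_on_subset[OF continuous_on_product_coordinates]) auto

lemma closed_Dcone: "closed (Dcone n)"
proof -
  have "Dcone n = {x. \<forall>i. (n \<le> i \<longrightarrow> x i = 0) \<and> (\<forall>j. i \<le> j \<longrightarrow> j < n \<longrightarrow> x j \<le> x i)}"
    unfolding Dcone_def vecs_def by auto
  also have "closed \<dots>"
    by (intro closed_Collect_all closed_Collect_conj closed_Collect_imp open_Collect_const
         closed_Collect_eq closed_Collect_le coord_cont continuous_on_const)
  finally show ?thesis .
qed

lemma sqdist_cont: "continuous_on S (\<lambda>x. sqdist n x c)"
  unfolding sqdist_def by (intro continuous_intros coord_cont)

lemma proj_exists: "\<exists>!p. p \<in> Dcone n \<and> (\<forall>u\<in>Dcone n. sqdist n p c \<le> sqdist n u c)"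
proof -
  define S where "S = sqdist n (\<lambda>_. 0) c"
  define M where "M = S + 1"
  define T where "T = (\<lambda>i. if i < n then {c i - M .. c i + M} else {0::real})"
  define B where "B = Pi UNIV T"
  have "compactin (product_topology (\<lambda>i. euclidean) UNIV) (PiE UNIV T)"
    unfolding compactin_PiE T_def by auto
  then have cB: "compact B" unfolding B_def PiE_UNIV_domain euclidean_product_topology by simp
  have z0D: "(\<lambda>_. 0) \<in> Dcone n" unfolding Dcone_def vecs_def by auto
  have z0B: "(\<lambda>_. 0) \<in> B"
  proof -
    have "- M \<le> c i \<and> c i \<le> M" if "i < n" for i
      using sq_bound[OF term_le_sqdist[OF that, of "\<lambda>_. 0" c]] unfolding M_def S_def by (simp add: abs_le_iff)
    then show ?thesis unfolding B_def T_def by (fastforce simp: algebra_simps)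
  qed
  have cK: "compact (Dcone n \<inter> B)" using cB closed_Dcone by (simp add: closed_Int_compact)
  obtain p where pK: "p \<in> Dcone n \<inter> B" and pmin: "\<forall>u\<in>Dcone n \<inter> B. sqdist n p c \<le> sqdist n u c"
    using continuous_attains_inf[OF cK _ sqdist_cont] z0D z0B by blast
  have pS: "sqdist n p c \<le> S" using pmin z0D z0B unfolding S_def by auto
  have pm: "\<forall>u\<in>Dcone n. sqdist n p c \<le> sqdist n u c"
  proof
    fix u assume uD: "u \<in> Dcone n"
    show "sqdist n p c \<le> sqdist n u c"
    proof (cases "u \<in> B")
      case True then show ?thesis using pmin uD by auto
    next
      case False
      have "u i = 0" if "\<not> i < n" for i using uD that unfolding Dcone_def vecs_def by auto
      have "\<exists>i. i < n \<and> u i \<notin> {c i - M .. c i + M}"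
      proof (rule ccontr)
        assume "\<not> ?thesis"
        then have "u \<in> B" using \<open>\<And>i. \<not> i < n \<Longrightarrow> u i = 0\<close> unfolding B_def T_def by auto
        with False show False by simp
      qed
      then obtain i where i: "i < n" "u i \<notin> {c i - M .. c i + M}" by blast
      then have "\<bar>u i - c i\<bar> > S + 1" unfolding M_def by auto
      then have "(u i - c i)^2 > S" using sq_bound[of "u i - c i" S] by linarith
      then show ?thesis using term_le_sqdist[OF i(1), of u c] pS by linarith
    qed
  qed
  have uniq: "q = p" if qD: "q \<in> Dcone n" and qm: "\<forall>u\<in>Dcone n. sqdist n q c \<le> sqdist n u c" for q
  proof -
    define m where "m = (\<lambda>k. (p k + q k) / 2)"
    have mD: "m \<in> Dcone n" using pK qD unfolding Dcone_def vecs_def m_def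
      by (auto intro: add_mono)
    have eq: "sqdist n m c = (sqdist n p c + sqdist n q c) / 2 - (\<Sum>k<n. (p k - q k)^2) / 4"
    proof -
      have "sqdist n m c = (\<Sum>k<n. ((p k - c k)^2 + (q k - c k)^2)/2 - (p k - q k)^2/4)"
        unfolding sqdist_def m_def by (intro sum.cong refl) (simp add: power2_eq_square field_simps)
      also have "\<dots> = (sqdist n p c + sqdist n q c) / 2 - (\<Sum>k<n. (p k - q k)^2) / 4"
        unfolding sqdist_def by (simp add: sum_subtractf sum_divide_distrib[symmetric] sum.distrib)
      finally show ?thesis .
    qed
    have "sqdist n p c \<le> sqdist n m c" using pm mD by auto
    moreover have "sqdist n q c = sqdist n p c" using pm qm pK qD by (meson IntD1 order_antisym)
    ultimately have le: "(\<Sum>k<n. (p k - q k)^2) \<le> 0" using eq by argo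
    have "\<forall>k\<in>{..<n}. (p k - q k)^2 = 0"
    proof -
      have "(\<Sum>k<n. (p k - q k)^2) \<ge> 0" by (rule sum_nonneg) simp
      then have "(\<Sum>k<n. (p k - q k)^2) = 0" using le by linarith
      then show ?thesis by (subst (asm) sum_nonneg_eq_0_iff) auto
    qed
    then have "p k = q k" for k using pK qD unfolding Dcone_def vecs_def
      by (cases "k < n") auto
    then show ?thesis by auto
  qed
  show ?thesis using pK pm uniq by blast
qed

lemma projD_prop: "projD n c \<in> Dcone n \<and> (\<forall>u\<in>Dcone n. sqdist n (projD n c) c \<le> sqdist n u c)"
  unfolding projD_def by (rule theI'[OF proj_exists])


lemma permmat:
  assumes P: "is_perm_matrix n P"
  obtains \<sigma> where "\<sigma> permutes {..<n}" "\<And>x. x \<in> vecs n \<Longrightarrow> mv n P x = x \<circ> \<sigma>"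
    "\<And>x. x \<in> vecs n \<Longrightarrow> mv n (transp_mat P) x = x \<circ> inv \<sigma>"
proof -
  have P01: "\<And>i j. i < n \<Longrightarrow> j < n \<Longrightarrow> P i j = 0 \<or> P i j = 1"
   and row: "\<And>i. i < n \<Longrightarrow> \<exists>!j. j < n \<and> P i j = 1"
   and col: "\<And>j. j < n \<Longrightarrow> \<exists>!i. i < n \<and> P i j = 1"
    using P unfolding is_perm_matrix_def by auto
  define \<sigma> where "\<sigma> = (\<lambda>i. if i < n then (THE j. j < n \<and> P i j = 1) else i)"
  have s1: "\<sigma> i < n \<and> P i (\<sigma> i) = 1" if "i < n" for i
    using theI'[OF row[OF that]] that unfolding \<sigma>_def by simp
  have s2: "P i j = 1 \<longleftrightarrow> j = \<sigma> i" if "i < n" "j < n" for i j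
    using s1[OF that(1)] row[OF that(1)] that by auto
  have sout: "\<sigma> i = i" if "\<not> i < n" for i using that unfolding \<sigma>_def by simp
  have inj: "inj_on \<sigma> {..<n}"
  proof (rule inj_onI)
    fix i i' assume h: "i \<in> {..<n}" "i' \<in> {..<n}" "\<sigma> i = \<sigma> i'"
    have a: "\<sigma> i < n" "P i (\<sigma> i) = 1" "P i' (\<sigma> i) = 1" "i < n" "i' < n"
      using s1[of i] s1[of i'] h by auto
    show "i = i'" using col[OF a(1)] a(2-5) by blast
  qed
  have perm: "\<sigma> permutes {..<n}"
    by (rule inj_imp_permutes[OF inj]) (auto simp: s1 sout)
  have Pij: "P i j = (if j = \<sigma> i then 1 else 0)" if "i < n" "j < n" for i j
    using s2[OF that] P01[OF that] by auto
  have mv1: "mv n P x = x \<circ> \<sigma>" if x: "x \<in> vecs n" for x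
  proof
    fix i show "mv n P x i = (x \<circ> \<sigma>) i"
    proof (cases "i < n")
      case True
      have "(\<Sum>j<n. P i j * x j) = (\<Sum>j<n. if j = \<sigma> i then x j else 0)"
        by (intro sum.cong refl) (simp add: Pij True)
      also have "\<dots> = x (\<sigma> i)" using s1[OF True] by simp
      finally show ?thesis using True by (simp add: mv_def)
    next
      case False then show ?thesis using x by (simp add: mv_def sout vecs_def)
    qed
  qed
  have ip: "inv \<sigma> permutes {..<n}" by (rule permutes_inv[OF perm])
  have mv2: "mv n (transp_mat P) x = x \<circ> inv \<sigma>" if x: "x \<in> vecs n" for x
  proof
    fix i show "mv n (transp_mat P) x i = (x \<circ> inv \<sigma>) i"
    proof (cases "i < n")
      case True
      have iv: "inv \<sigma> i < n" using permutes_in_image[OF ip] True by simp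
      have "(\<Sum>j<n. P j i * x j) = (\<Sum>j<n. if j = inv \<sigma> i then x j else 0)"
      proof (intro sum.cong refl)
        fix j assume "j \<in> {..<n}"
        then have "i = \<sigma> j \<longleftrightarrow> j = inv \<sigma> i"
          using permutes_inverses[OF perm] by metis
        then show "P j i * x j = (if j = inv \<sigma> i then x j else 0)"
          using Pij[of j i] True \<open>j \<in> {..<n}\<close> by auto
      qed
      also have "\<dots> = x (inv \<sigma> i)" using iv by simp
      finally show ?thesis using True by (simp add: mv_def transp_mat_def)
    next
      case False
      have "inv \<sigma> i = i" using permutes_not_in[OF ip] False by simp
      then show ?thesis using x False by (simp add: mv_def vecs_def)
    qed
  qed
  show ?thesis using that perm mv1 mv2 by blast
qed

lemma quad_id:
  assumes "x \<in> Dcone n"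
  shows "flobj n \<rho> z x = 1/2 * sqdist n x (\<lambda>k. z k - \<rho> * wvec n k)
           + (\<rho> * (\<Sum>k<n. wvec n k * z k) - \<rho>^2/2 * (\<Sum>k<n. (wvec n k)^2))"
proof -
  have "flobj n \<rho> z x = (\<Sum>k<n. 1/2 * (x k - z k)^2 + \<rho> * (wvec n k * x k))"
    unfolding flobj_alt Jf_D[OF assms] sqdist_def by (simp add: sum.distrib sum_distrib_left)
  also have "\<dots> = (\<Sum>k<n. 1/2 * (x k - (z k - \<rho> * wvec n k))^2 + (\<rho> * (wvec n k * z k) - \<rho>^2/2 * (wvec n k)^2))"
    by (intro sum.cong refl) (simp add: power2_eq_square algebra_simps)
  also have "\<dots> = 1/2 * sqdist n x (\<lambda>k. z k - \<rho> * wvec n k)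
           + (\<rho> * (\<Sum>k<n. wvec n k * z k) - \<rho>^2/2 * (\<Sum>k<n. (wvec n k)^2))"
    unfolding sqdist_def by (simp add: sum.distrib sum_distrib_left sum_subtractf)
  finally show ?thesis .
qed

lemma sorted_case:
  assumes rho: "\<rho> > 0" and z: "\<forall>i j. i \<le> j \<longrightarrow> j < n \<longrightarrow> z j \<le> z i"
  shows "S_set n \<rho> z = {projD n (\<lambda>k. z k - \<rho> * wvec n k)}"
proof -
  define c where "c = (\<lambda>k. z k - \<rho> * wvec n k)"
  define p where "p = projD n c"
  define K where "K = \<rho> * (\<Sum>k<n. wvec n k * z k) - \<rho>^2/2 * (\<Sum>k<n. (wvec n k)^2)"
  have pD: "p \<in> Dcone n" and pm: "\<forall>u\<in>Dcone n. sqdist n p c \<le> sqdist n u c"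
    using projD_prop[of n c] unfolding p_def by auto
  have qi: "flobj n \<rho> z x = 1/2 * sqdist n x c + K" if "x \<in> Dcone n" for x
    using quad_id[OF that] unfolding c_def K_def by simp
  have pv: "p \<in> vecs n" using pD unfolding Dcone_def by auto
  have pmin: "flobj n \<rho> z p \<le> flobj n \<rho> z u" if u: "u \<in> vecs n" for u
  proof -
    obtain v where v: "v \<in> Dcone n" "sqdist n v z \<le> sqdist n u z" "Jf n v = Jf n u"
      using rearr[OF u z] by blast
    have "flobj n \<rho> z p = 1/2 * sqdist n p c + K" by (rule qi[OF pD])
    also have "\<dots> \<le> 1/2 * sqdist n v c + K" using pm v(1) by auto
    also have "\<dots> = flobj n \<rho> z v" by (rule qi[OF v(1), symmetric])
    also have "\<dots> \<le> flobj n \<rho> z u" unfolding flobj_alt using v by simp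
    finally show ?thesis .
  qed
  have pS: "p \<in> S_set n \<rho> z" unfolding S_set_def using pv pmin by auto
  have uniq: "x = p" if xS: "x \<in> S_set n \<rho> z" for x
  proof -
    have xv: "x \<in> vecs n" and xm: "\<forall>u\<in>vecs n. flobj n \<rho> z x \<le> flobj n \<rho> z u"
      using xS unfolding S_set_def by auto
    define m where "m = (\<lambda>k. (x k + p k) / 2)"
    have mv: "m \<in> vecs n" using xv pv unfolding vecs_def m_def by auto
    have sq: "sqdist n m z = (sqdist n x z + sqdist n p z) / 2 - (\<Sum>k<n. (x k - p k)^2) / 4"
    proof -
      have "sqdist n m z = (\<Sum>k<n. ((x k - z k)^2 + (p k - z k)^2)/2 - (x k - p k)^2/4)"
        unfolding sqdist_def m_def by (intro sum.cong refl) (simp add: power2_eq_square field_simps)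
      also have "\<dots> = (sqdist n x z + sqdist n p z) / 2 - (\<Sum>k<n. (x k - p k)^2) / 4"
        unfolding sqdist_def by (simp add: sum_subtractf sum_divide_distrib[symmetric] sum.distrib)
      finally show ?thesis .
    qed
    have Jm: "Jf n m \<le> (Jf n x + Jf n p) / 2"
    proof -
      have "Jf n m \<le> (\<Sum>i<n. \<Sum>j\<in>{i<..<n}. (\<bar>x i - x j\<bar> + \<bar>p i - p j\<bar>) / 2)"
        unfolding Jf_def m_def
      proof (intro sum_mono)
        fix i j
        have "(x i + p i) / 2 - (x j + p j) / 2 = ((x i - x j) + (p i - p j)) / 2" by (simp add: field_simps)
        then have "\<bar>(x i + p i) / 2 - (x j + p j) / 2\<bar> = \<bar>(x i - x j) + (p i - p j)\<bar> / 2"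
          by (metis abs_divide abs_numeral)
        also have "\<dots> \<le> (\<bar>x i - x j\<bar> + \<bar>p i - p j\<bar>) / 2"
          by (intro divide_right_mono abs_triangle_ineq) simp
        finally show "\<bar>(x i + p i) / 2 - (x j + p j) / 2\<bar> \<le> (\<bar>x i - x j\<bar> + \<bar>p i - p j\<bar>) / 2" .
      qed
      also have "\<dots> = (Jf n x + Jf n p) / 2"
        unfolding Jf_def by (simp add: sum_divide_distrib[symmetric] sum.distrib)
      finally show ?thesis .
    qed
    have e1: "flobj n \<rho> z x = flobj n \<rho> z p" using xm pmin xv pv by (meson order_antisym)
    have "flobj n \<rho> z p \<le> flobj n \<rho> z m" using pmin mv by auto
    moreover have "\<rho> * Jf n m \<le> \<rho> * ((Jf n x + Jf n p) / 2)" using Jm rho by simp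
    ultimately have le: "(\<Sum>k<n. (x k - p k)^2) \<le> 0"
      using e1 sq unfolding flobj_alt by argo
    have "\<forall>k\<in>{..<n}. (x k - p k)^2 = 0"
    proof -
      have "(\<Sum>k<n. (x k - p k)^2) \<ge> 0" by (rule sum_nonneg) simp
      then have "(\<Sum>k<n. (x k - p k)^2) = 0" using le by linarith
      then show ?thesis by (subst (asm) sum_nonneg_eq_0_iff) auto
    qed
    then have "x k = p k" for k using xv pv unfolding vecs_def by (cases "k < n") auto
    then show ?thesis by auto
  qed
  show ?thesis using pS uniq unfolding p_def c_def by blast
qed

theorem mainTheorem3:
  fixes n :: nat and \<rho> :: real and y :: "nat \<Rightarrow> real" and P :: "nat \<Rightarrow> nat \<Rightarrow> real"
  assumes "\<rho> > 0"
    and "y \<in> vecs n"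
    and "is_perm_matrix n P"
    and "\<forall>i j. i \<le> j \<longrightarrow> j < n \<longrightarrow> mv n P y j \<le> mv n P y i"
  shows "S_set n \<rho> y =
           {mv n (transp_mat P) (projD n (\<lambda>k. mv n P y k - \<rho> * wvec n k))}"
proof -
  obtain \<sigma> where perm: "\<sigma> permutes {..<n}" and m1: "\<And>x. x \<in> vecs n \<Longrightarrow> mv n P x = x \<circ> \<sigma>"
    and m2: "\<And>x. x \<in> vecs n \<Longrightarrow> mv n (transp_mat P) x = x \<circ> inv \<sigma>"
    using permmat[OF assms(3)] by blast
  define z where "z = mv n P y"
  have zy: "z = y \<circ> \<sigma>" unfolding z_def using m1[OF assms(2)] .
  define p where "p = projD n (\<lambda>k. z k - \<rho> * wvec n k)"
  have Sz: "S_set n \<rho> z = {p}" unfolding p_def using sorted_case[OF assms(1)] assms(4) z_def by simp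
  have pv: "p \<in> vecs n" using projD_prop unfolding p_def Dcone_def by blast
  have inv1: "\<And>x. (x \<circ> \<sigma>) \<circ> inv \<sigma> = x" and inv2: "\<And>x. (x \<circ> inv \<sigma>) \<circ> \<sigma> = x"
    using permutes_inverses[OF perm] by (auto simp: fun_eq_iff)
  have vc: "x \<circ> \<sigma> \<in> vecs n" if "x \<in> vecs n" for x
    using that permutes_not_in[OF perm] unfolding vecs_def by auto
  have vci: "x \<circ> inv \<sigma> \<in> vecs n" if "x \<in> vecs n" for x
    using that permutes_not_in[OF permutes_inv[OF perm]] unfolding vecs_def by auto
  have fo: "flobj n \<rho> z (x \<circ> \<sigma>) = flobj n \<rho> y x" for x
    unfolding flobj_alt zy sqdist_perm[OF perm] Jf_perm[OF perm] ..
  have iff: "x \<in> S_set n \<rho> y \<longleftrightarrow> x \<circ> \<sigma> \<in> S_set n \<rho> z" if xv: "x \<in> vecs n" for x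
  proof
    assume "x \<in> S_set n \<rho> y"
    then have h: "\<forall>u\<in>vecs n. flobj n \<rho> y x \<le> flobj n \<rho> y u" unfolding S_set_def by auto
    have "flobj n \<rho> z (x \<circ> \<sigma>) \<le> flobj n \<rho> z u" if "u \<in> vecs n" for u
      using h[rule_format, OF vci[OF that]] fo[of x] fo[of "u \<circ> inv \<sigma>"] inv2[of u] by simp
    then show "x \<circ> \<sigma> \<in> S_set n \<rho> z" unfolding S_set_def using vc[OF xv] by auto
  next
    assume "x \<circ> \<sigma> \<in> S_set n \<rho> z"
    then have h: "\<forall>u\<in>vecs n. flobj n \<rho> z (x \<circ> \<sigma>) \<le> flobj n \<rho> z u" unfolding S_set_def by auto
    have "flobj n \<rho> y x \<le> flobj n \<rho> y u" if "u \<in> vecs n" for u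
      using h[rule_format, OF vc[OF that]] fo[of x] fo[of u] by simp
    then show "x \<in> S_set n \<rho> y" unfolding S_set_def using xv by auto
  qed
  have "S_set n \<rho> y = {p \<circ> inv \<sigma>}"
  proof (intro set_eqI iffI)
    fix x assume xS: "x \<in> S_set n \<rho> y"
    then have xv: "x \<in> vecs n" unfolding S_set_def by auto
    then have "x \<circ> \<sigma> = p" using iff xS Sz by auto
    then show "x \<in> {p \<circ> inv \<sigma>}" using inv1[of x] by auto
  next
    fix x assume "x \<in> {p \<circ> inv \<sigma>}"
    then have x: "x = p \<circ> inv \<sigma>" by simp
    then have "x \<circ> \<sigma> = p" using inv2 by simp
    then show "x \<in> S_set n \<rho> y" using iff[OF vci[OF pv]] x Sz by simp
  qed
  then show ?thesis using m2[OF pv] unfolding p_def z_def by simp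
qed

end
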